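(* Let $P$ be a non-centered \textsf{Z}-convex polyomino which is descending. Let $c_1$ be the leftmost column of $P$, let $X$ be the row of $P$ containing the top cell of $c_1$ and $Y$ the row containing the bottom cell of $c_1$. Let $S$ be the column of $P$ containing the rightmost cell of $X$, and $T$ the column of $P$ containing the rightmost cell of $Y$. Let $\theta$ be the set of cells of $P$ lying in columns strictly to the right of $T$. Then $\theta$ contains no cell lower than the lowest cell of $P$ in the column $S$.
   Context: A cell is a unit square of $\mathbb Z\times\mathbb Z$; a polyomino is a finite connected union of cells with no cut point. A polyomino is convex if its intersection with every vertical and every horizontal line of cells is connected; a convex polyomino is centered if some row touches both the left and right sides of its minimal bounding rectangle. A path in a polyomino is a self-avoiding sequence of unit steps $N,S,E,W$ between adjacent cells; it is monotone if it uses only two step types; a change of direction is a pair of consecutive distinct steps. A convex polyomino is \textsf{Z}-convex if every pair of its cells is connected by a monotone path with at most two changes of direction. For a non-centered convex polyomino with $c_1,X,Y$ as in the claim, its rightmost column lies entirely above $X$ or entirely below $Y$; it is called descending if its rightmost column lies entirely below the row $Y$. *)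

theory Defs
  imports Main
begin

text \<open>A cell is identified with its lower-left corner (x,y) in Z x Z:
 x is the column index, y the row index (y grows upward).\<close>
type_synonym cell = "int \<times> int"

definition adjacent :: "cell \<Rightarrow> cell \<Rightarrow> bool" where
  "adjacent a b \<longleftrightarrow> \<bar>fst a - fst b\<bar> + \<bar>snd a - snd b\<bar> = 1"

definition is_path :: "cell set \<Rightarrow> cell list \<Rightarrow> bool" where
  "is_path P p \<longleftrightarrow> p \<noteq> [] \<and> distinct p \<and> set p \<subseteq> P \<and>
     (\<forall>i. Suc i < length p \<longrightarrow> adjacent (p ! i) (p ! Suc i))"

definition steps :: "cell list \<Rightarrow> cell list" where
  "steps p = map (\<lambda>(a, b). (fst b - fst a, snd b - snd a)) (zip p (tl p))"

definition monotone_path :: "cell list \<Rightarrow> bool" where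
  "monotone_path p \<longleftrightarrow> card (set (steps p)) \<le> 2"

definition changes :: "cell list \<Rightarrow> nat" where
  "changes p = length (filter (\<lambda>(s, t). s \<noteq> t) (zip (steps p) (tl (steps p))))"

definition polyomino :: "cell set \<Rightarrow> bool" where
  "polyomino P \<longleftrightarrow> finite P \<and> P \<noteq> {} \<and>
     (\<forall>a\<in>P. \<forall>b\<in>P. \<exists>p. is_path P p \<and> hd p = a \<and> last p = b)"

definition convex_polyomino :: "cell set \<Rightarrow> bool" where
  "convex_polyomino P \<longleftrightarrow> polyomino P \<and>
     (\<forall>x y1 y2 y. (x, y1) \<in> P \<longrightarrow> (x, y2) \<in> P \<longrightarrow> y1 \<le> y \<longrightarrow> y \<le> y2 \<longrightarrow> (x, y) \<in> P) \<and>
     (\<forall>y x1 x2 x. (x1, y) \<in> P \<longrightarrow> (x2, y) \<in> P \<longrightarrow> x1 \<le> x \<longrightarrow> x \<le> x2 \<longrightarrow> (x, y) \<in> P)"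

definition minx :: "cell set \<Rightarrow> int" where "minx P = Min (fst ` P)"
definition maxx :: "cell set \<Rightarrow> int" where "maxx P = Max (fst ` P)"

definition centered :: "cell set \<Rightarrow> bool" where
  "centered P \<longleftrightarrow> convex_polyomino P \<and>
     (\<exists>y. (minx P, y) \<in> P \<and> (maxx P, y) \<in> P)"

definition Z_convex :: "cell set \<Rightarrow> bool" where
  "Z_convex P \<longleftrightarrow> convex_polyomino P \<and>
     (\<forall>a\<in>P. \<forall>b\<in>P. \<exists>p. is_path P p \<and> hd p = a \<and> last p = b \<and>
        monotone_path p \<and> changes p \<le> 2)"

definition rowX :: "cell set \<Rightarrow> int" where "rowX P = Max {y. (minx P, y) \<in> P}"
definition rowY :: "cell set \<Rightarrow> int" where "rowY P = Min {y. (minx P, y) \<in> P}"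

definition colS :: "cell set \<Rightarrow> int" where "colS P = Max {x. (x, rowX P) \<in> P}"
definition colT :: "cell set \<Rightarrow> int" where "colT P = Max {x. (x, rowY P) \<in> P}"

definition descending :: "cell set \<Rightarrow> bool" where
  "descending P \<longleftrightarrow> (\<forall>y. (maxx P, y) \<in> P \<longrightarrow> y < rowY P)"

definition theta :: "cell set \<Rightarrow> cell set" where
  "theta P = {c \<in> P. fst c > colT P}"

end

theory Submission
  imports Defs
begin


definition chg :: "cell list \<Rightarrow> nat" where
  "chg s = length (filter (\<lambda>(s, t). s \<noteq> t) (zip s (tl s)))"

lemma changes_chg: "changes p = chg (steps p)"
  by (simp add: changes_def chg_def)

lemma chg_simps[simp]: "chg [] = 0" "chg [u] = 0"
  "chg (u # v # s) = (if u \<noteq> v then 1 else 0) + chg (v # s)"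
  by (auto simp: chg_def)

lemma steps_simps[simp]: "steps [] = []" "steps [a] = []"
  "steps (a # b # q) = (fst b - fst a, snd b - snd a) # steps (b # q)"
  by (auto simp: steps_def)


lemma chg0: "chg s = 0 \<Longrightarrow> u \<in> set s \<Longrightarrow> u = hd s"
proof (induction s rule: induct_list012)
  case (3 x y zs)
  then show ?case by (auto split: if_splits)
qed auto

lemma vert: "set (steps p) \<subseteq> {(0,-1)} \<Longrightarrow> c \<in> set p \<Longrightarrow> fst c = fst (hd p)"
proof (induction p rule: induct_list012)
  case (3 x y zs)
  then show ?case by auto
qed auto

lemma horiz: "set (steps p) \<subseteq> {(1,0)} \<Longrightarrow> c \<in> set p \<Longrightarrow> snd c = snd (hd p)"
proof (induction p rule: induct_list012)
  case (3 x y zs)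
  then show ?case by auto
qed auto

lemma allsame: "chg (steps p) = 0 \<Longrightarrow> set (steps p) \<subseteq> {hd (steps p)}"
  using chg0 by blast

lemma L1S: "p \<noteq> [] \<Longrightarrow> set (steps p) \<subseteq> {(1,0),(0,-1)} \<Longrightarrow> chg (steps p) \<le> 1 \<Longrightarrow>
  (steps p = [] \<or> hd (steps p) = (0,-1)) \<Longrightarrow> (fst (hd p), snd (last p)) \<in> set p"
proof (induction p rule: induct_list012)
  case (3 a b q)
  show ?case
  proof (cases "steps (b # q) = []")
    case True
    then have "q = []" by (cases q) auto
    then show ?thesis using 3 by (cases a; cases b) auto
  next
    case False
    then obtain c q' where q: "q = c # q'" by (cases q) auto
    have st: "(fst b - fst a, snd b - snd a) = (0,-1)" using 3 by simp
    have "hd (steps (b#q)) = (1,0) \<or> hd (steps (b#q)) = (0,-1)" using 3(4) False by (cases "steps (b#q)") auto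
    then show ?thesis
    proof
      assume h: "hd (steps (b#q)) = (1,0)"
      then have "chg (steps (b#q)) = 0" using 3(5) st q by auto
      then have "set (steps (b#q)) \<subseteq> {(1,0)}" using allsame h by metis
      then have "snd (last (b#q)) = snd b" using horiz[of "b#q" "last (b#q)"] by simp
      moreover have "fst a = fst b" using st by simp
      ultimately show ?thesis by (cases b) auto
    next
      assume h: "hd (steps (b#q)) = (0,-1)"
      have "(fst (hd (b#q)), snd (last (b#q))) \<in> set (b#q)"
        apply (rule 3(2)) using 3(4,5) h q st by (auto split: if_splits)
      moreover have "fst a = fst b" using st by simp
      ultimately show ?thesis by simp
    qed
  qed
qed auto

lemma L1E: "p \<noteq> [] \<Longrightarrow> set (steps p) \<subseteq> {(1,0),(0,-1)} \<Longrightarrow> chg (steps p) \<le> 1 \<Longrightarrow>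
  (steps p = [] \<or> hd (steps p) = (1,0)) \<Longrightarrow> (fst (last p), snd (hd p)) \<in> set p"
proof (induction p rule: induct_list012)
  case (3 a b q)
  show ?case
  proof (cases "steps (b # q) = []")
    case True
    then have "q = []" by (cases q) auto
    then show ?thesis using 3 by (cases a; cases b) auto
  next
    case False
    then obtain c q' where q: "q = c # q'" by (cases q) auto
    have st: "(fst b - fst a, snd b - snd a) = (1,0)" using 3 by simp
    have "hd (steps (b#q)) = (1,0) \<or> hd (steps (b#q)) = (0,-1)" using 3(4) False by (cases "steps (b#q)") auto
    then show ?thesis
    proof
      assume h: "hd (steps (b#q)) = (0,-1)"
      then have "chg (steps (b#q)) = 0" using 3(5) st q by auto
      then have "set (steps (b#q)) \<subseteq> {(0,-1)}" using allsame h by metis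
      then have "fst (last (b#q)) = fst b" using vert[of "b#q" "last (b#q)"] by simp
      moreover have "snd a = snd b" using st by simp
      ultimately show ?thesis by (cases b) auto
    next
      assume h: "hd (steps (b#q)) = (1,0)"
      have "(fst (last (b#q)), snd (hd (b#q))) \<in> set (b#q)"
        apply (rule 3(2)) using 3(4,5) h q st by (auto split: if_splits)
      moreover have "snd a = snd b" using st by simp
      ultimately show ?thesis by simp
    qed
  qed
qed auto

lemma L2S: "p \<noteq> [] \<Longrightarrow> set (steps p) \<subseteq> {(1,0),(0,-1)} \<Longrightarrow> chg (steps p) \<le> 2 \<Longrightarrow>
  (steps p = [] \<or> hd (steps p) = (0,-1)) \<Longrightarrow>
  \<exists>r. (fst (hd p), r) \<in> set p \<and> (fst (last p), r) \<in> set p"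
proof (induction p rule: induct_list012)
  case (2 a) then show ?case by (cases a) auto
next
  case (3 a b q)
  show ?case
  proof (cases "steps (b # q) = []")
    case True
    then have "q = []" by (cases q) auto
    then show ?thesis using 3 by (cases a; cases b) auto
  next
    case False
    then obtain c q' where q: "q = c # q'" by (cases q) auto
    have st: "(fst b - fst a, snd b - snd a) = (0,-1)" using 3 by simp
    have "hd (steps (b#q)) = (1,0) \<or> hd (steps (b#q)) = (0,-1)" using 3(4) False by (cases "steps (b#q)") auto
    then show ?thesis
    proof
      assume h: "hd (steps (b#q)) = (1,0)"
      then have "chg (steps (b#q)) \<le> 1" using 3(5) st q by auto
      then have "(fst (last (b#q)), snd (hd (b#q))) \<in> set (b#q)"
        using L1E[of "b#q"] 3(4) h by auto
      moreover have "fst a = fst b" using st by simp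
      ultimately show ?thesis by (cases b) (auto intro!: exI[of _ "snd b"])
    next
      assume h: "hd (steps (b#q)) = (0,-1)"
      have "\<exists>r. (fst (hd (b#q)), r) \<in> set (b#q) \<and> (fst (last (b#q)), r) \<in> set (b#q)"
        apply (rule 3(2)) using 3(4,5) h q st by (auto split: if_splits)
      moreover have "fst a = fst b" using st by simp
      ultimately show ?thesis by auto
    qed
  qed
qed auto

lemma L2E: "p \<noteq> [] \<Longrightarrow> set (steps p) \<subseteq> {(1,0),(0,-1)} \<Longrightarrow> chg (steps p) \<le> 2 \<Longrightarrow>
  (steps p = [] \<or> hd (steps p) = (1,0)) \<Longrightarrow>
  \<exists>k. (k, snd (hd p)) \<in> set p \<and> (k, snd (last p)) \<in> set p"
proof (induction p rule: induct_list012)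
  case (2 a) then show ?case by (cases a) auto
next
  case (3 a b q)
  show ?case
  proof (cases "steps (b # q) = []")
    case True
    then have "q = []" by (cases q) auto
    then show ?thesis using 3 by (cases a; cases b) auto
  next
    case False
    then obtain c q' where q: "q = c # q'" by (cases q) auto
    have st: "(fst b - fst a, snd b - snd a) = (1,0)" using 3 by simp
    have "hd (steps (b#q)) = (1,0) \<or> hd (steps (b#q)) = (0,-1)" using 3(4) False by (cases "steps (b#q)") auto
    then show ?thesis
    proof
      assume h: "hd (steps (b#q)) = (0,-1)"
      then have "chg (steps (b#q)) \<le> 1" using 3(5) st q by auto
      then have "(fst (hd (b#q)), snd (last (b#q))) \<in> set (b#q)"
        using L1S[of "b#q"] 3(4) h by auto
      moreover have "snd a = snd b" using st by simp
      ultimately show ?thesis by (cases b) (auto intro!: exI[of _ "fst b"])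
    next
      assume h: "hd (steps (b#q)) = (1,0)"
      have "\<exists>k. (k, snd (hd (b#q))) \<in> set (b#q) \<and> (k, snd (last (b#q))) \<in> set (b#q)"
        apply (rule 3(2)) using 3(4,5) h q st by (auto split: if_splits)
      moreover have "snd a = snd b" using st by simp
      ultimately show ?thesis by auto
    qed
  qed
qed auto

lemma sumx: "p \<noteq> [] \<Longrightarrow> fst (last p) - fst (hd p) = sum_list (map fst (steps p))"
  by (induction p rule: induct_list012) auto

lemma sumy: "p \<noteq> [] \<Longrightarrow> snd (last p) - snd (hd p) = sum_list (map snd (steps p))"
  by (induction p rule: induct_list012) auto

lemma unit_steps: "(\<forall>i. Suc i < length p \<longrightarrow> adjacent (p ! i) (p ! Suc i)) \<Longrightarrow>
   u \<in> set (steps p) \<Longrightarrow> \<bar>fst u\<bar> + \<bar>snd u\<bar> = 1"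
proof (induction p rule: induct_list012)
  case (3 a b q)
  have h: "\<forall>i. Suc i < length (b#q) \<longrightarrow> adjacent ((b#q) ! i) ((b#q) ! Suc i)"
  proof (intro allI impI)
    fix i assume "Suc i < length (b#q)"
    then have "Suc (Suc i) < length (a#b#q)" by simp
    then have "adjacent ((a#b#q) ! Suc i) ((a#b#q) ! Suc (Suc i))" using 3(3) by blast
    then show "adjacent ((b#q) ! i) ((b#q) ! Suc i)" by simp
  qed
  have "Suc 0 < length (a#b#q)" by simp
  then have "adjacent ((a#b#q) ! 0) ((a#b#q) ! Suc 0)" using 3(3) by blast
  then have "adjacent a b" by simp
  then have ab: "\<bar>fst b - fst a\<bar> + \<bar>snd b - snd a\<bar> = 1" by (simp add: adjacent_def abs_minus_commute)
  from 3(4) have "u = (fst b - fst a, snd b - snd a) \<or> u \<in> set (steps (b#q))" by simp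
  then show ?case using 3(2) h ab by auto
qed auto


lemma sum_list_nonpos': "(\<forall>x\<in>set xs. x \<le> (0::int)) \<Longrightarrow> sum_list xs \<le> 0"
  by (induction xs) auto

lemma sum_list_nonneg': "(\<forall>x\<in>set xs. 0 \<le> (x::int)) \<Longrightarrow> 0 \<le> sum_list xs"
  by (induction xs) auto

lemma fin_col: "finite P \<Longrightarrow> finite {y. (a, y) \<in> (P::cell set)}"
proof -
  assume "finite P" then have "finite (snd ` P)" by simp
  moreover have "{y. (a,y) \<in> P} \<subseteq> snd ` P"
  proof
    fix y assume "y \<in> {y. (a,y) \<in> P}" then have "(a,y) \<in> P" by simp
    then show "y \<in> snd ` P" by (rule image_eqI[rotated]) simp
  qed
  ultimately show ?thesis by (rule finite_subset[rotated])
qed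

lemma fin_row: "finite P \<Longrightarrow> finite {x. (x, a) \<in> (P::cell set)}"
proof -
  assume "finite P" then have "finite (fst ` P)" by simp
  moreover have "{x. (x,a) \<in> P} \<subseteq> fst ` P"
  proof
    fix x assume "x \<in> {x. (x,a) \<in> P}" then have "(x,a) \<in> P" by simp
    then show "x \<in> fst ` P" by (rule image_eqI[rotated]) simp
  qed
  ultimately show ?thesis by (rule finite_subset[rotated])
qed

lemma zpath:
  assumes Z: "Z_convex P" and aP: "a \<in> P" and cP: "c \<in> P"
    and lt1: "fst a < fst c" and lt2: "snd c < snd a"
  shows "(\<exists>r. (fst a, r) \<in> P \<and> (fst c, r) \<in> P) \<or> (\<exists>k. (k, snd a) \<in> P \<and> (k, snd c) \<in> P)"
proof -
  obtain p where pp: "is_path P p" and hp: "hd p = a" and lp: "last p = c"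
    and mon: "monotone_path p" and ch: "changes p \<le> 2"
    using Z aP cP unfolding Z_convex_def by blast
  have ne: "p \<noteq> []" and sub: "set p \<subseteq> P"
    and adj: "\<forall>i. Suc i < length p \<longrightarrow> adjacent (p ! i) (p ! Suc i)"
    using pp unfolding is_path_def by auto
  have unit: "\<And>u. u \<in> set (steps p) \<Longrightarrow> \<bar>fst u\<bar> + \<bar>snd u\<bar> = 1"
    using unit_steps[OF adj] by blast
  have E: "(1,0) \<in> set (steps p)"
  proof (rule ccontr)
    assume nE: "(1,0) \<notin> set (steps p)"
    have "\<forall>x\<in>set (map fst (steps p)). x \<le> 0"
    proof
      fix x assume "x \<in> set (map fst (steps p))"
      then obtain u where u: "u \<in> set (steps p)" "x = fst u" by auto
      have "\<bar>fst u\<bar> + \<bar>snd u\<bar> = 1" using unit u(1) .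
      moreover have "u \<noteq> (1,0)" using nE u(1) by blast
      ultimately show "x \<le> 0" using u(2) by (cases u) auto
    qed
    then have "sum_list (map fst (steps p)) \<le> 0" by (rule sum_list_nonpos')
    then show False using sumx[OF ne] hp lp lt1 by simp
  qed
  have S: "(0,-1) \<in> set (steps p)"
  proof (rule ccontr)
    assume nS: "(0,-1) \<notin> set (steps p)"
    have "\<forall>x\<in>set (map snd (steps p)). 0 \<le> x"
    proof
      fix x assume "x \<in> set (map snd (steps p))"
      then obtain u where u: "u \<in> set (steps p)" "x = snd u" by auto
      have "\<bar>fst u\<bar> + \<bar>snd u\<bar> = 1" using unit u(1) .
      moreover have "u \<noteq> (0,-1)" using nS u(1) by blast
      ultimately show "0 \<le> x" using u(2) by (cases u) auto
    qed
    then have "0 \<le> sum_list (map snd (steps p))" by (rule sum_list_nonneg')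
    then show False using sumy[OF ne] hp lp lt2 by simp
  qed
  have eq: "set (steps p) = {(1,0),(0,-1)}"
  proof -
    have "{(1,0),(0,-1)} = set (steps p)"
    proof (rule card_seteq)
      show "finite (set (steps p))" by simp
      show "{(1,0),(0,-1)} \<subseteq> set (steps p)" using E S by simp
      show "card (set (steps p)) \<le> card {(1::int,0::int),(0,-1)}"
        using mon unfolding monotone_path_def by simp
    qed
    then show ?thesis by simp
  qed
  have chg2: "chg (steps p) \<le> 2" using ch by (simp add: changes_chg)
  have sne: "steps p \<noteq> []" using E by auto
  then have "hd (steps p) \<in> {(1,0),(0,-1)}" using eq hd_in_set by metis
  then have "hd (steps p) = (1,0) \<or> hd (steps p) = (0,-1)" by simp
  then show ?thesis
  proof
    assume "hd (steps p) = (1,0)"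
    then obtain k where "(k, snd (hd p)) \<in> set p \<and> (k, snd (last p)) \<in> set p"
      using L2E[OF ne _ chg2] eq by auto
    then show ?thesis using sub hp lp by blast
  next
    assume "hd (steps p) = (0,-1)"
    then obtain r where "(fst (hd p), r) \<in> set p \<and> (fst (last p), r) \<in> set p"
      using L2S[OF ne _ chg2] eq by auto
    then show ?thesis using sub hp lp by blast
  qed
qed

theorem mainTheorem3:
  fixes P :: "cell set"
  assumes "Z_convex P" and "\<not> centered P" and "descending P"
  shows "\<forall>c \<in> theta P. snd c \<ge> Min {y. (colS P, y) \<in> P}"
proof
  fix c assume cth: "c \<in> theta P"
  have Z: "Z_convex P" using assms(1) .
  have cv: "convex_polyomino P" using Z unfolding Z_convex_def by blast
  have fin: "finite P" and nemp: "P \<noteq> {}" using cv unfolding convex_polyomino_def polyomino_def by auto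
  have colc: "\<And>x y1 y2 y. (x, y1) \<in> P \<Longrightarrow> (x, y2) \<in> P \<Longrightarrow> y1 \<le> y \<Longrightarrow> y \<le> y2 \<Longrightarrow> (x, y) \<in> P"
    using cv unfolding convex_polyomino_def by blast
  have rowc: "\<And>y x1 x2 x. (x1, y) \<in> P \<Longrightarrow> (x2, y) \<in> P \<Longrightarrow> x1 \<le> x \<Longrightarrow> x \<le> x2 \<Longrightarrow> (x, y) \<in> P"
    using cv unfolding convex_polyomino_def by blast
  define mx where "mx = minx P"
  have mxle: "\<And>d. d \<in> P \<Longrightarrow> mx \<le> fst d" unfolding mx_def minx_def using fin by simp
  have "mx \<in> fst ` P" unfolding mx_def minx_def using fin nemp by simp
  then obtain y0 where y0: "(mx, y0) \<in> P" by force
  define A where "A = {y. (mx, y) \<in> P}"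
  have finA: "finite A" unfolding A_def using fin_col[OF fin] .
  have neA: "A \<noteq> {}" using y0 unfolding A_def by blast
  define X where "X = rowX P"
  define Y where "Y = rowY P"
  have XA: "X = Max A" unfolding X_def rowX_def A_def mx_def ..
  have YA: "Y = Min A" unfolding Y_def rowY_def A_def mx_def ..
  have XP: "(mx, X) \<in> P" using Max_in[OF finA neA] XA unfolding A_def by simp
  have YP: "(mx, Y) \<in> P" using Min_in[OF finA neA] YA unfolding A_def by simp
  have Yle: "\<And>y. (mx, y) \<in> P \<Longrightarrow> Y \<le> y" using Min_le[OF finA] YA unfolding A_def by simp
  have Xge: "\<And>y. (mx, y) \<in> P \<Longrightarrow> y \<le> X" using Max_ge[OF finA] XA unfolding A_def by simp
  have YX: "Y \<le> X" using Yle XP by blast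
  define B where "B = {x. (x, X) \<in> P}"
  have finB: "finite B" unfolding B_def using fin_row[OF fin] .
  have neB: "B \<noteq> {}" using XP unfolding B_def by blast
  define S where "S = colS P"
  have SB: "S = Max B" unfolding S_def colS_def B_def X_def ..
  have SP: "(S, X) \<in> P" using Max_in[OF finB neB] SB unfolding B_def by simp
  have Sge: "\<And>x. (x, X) \<in> P \<Longrightarrow> x \<le> S" using Max_ge[OF finB] SB unfolding B_def by simp
  define C where "C = {x. (x, Y) \<in> P}"
  have finC: "finite C" unfolding C_def using fin_row[OF fin] .
  have neC: "C \<noteq> {}" using YP unfolding C_def by blast
  define T where "T = colT P"
  have TC: "T = Max C" unfolding T_def colT_def C_def Y_def ..
  have Tge: "\<And>x. (x, Y) \<in> P \<Longrightarrow> x \<le> T" using Max_ge[OF finC] TC unfolding C_def by simp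
  have mxT: "mx \<le> T" using Tge YP by blast
  define D where "D = {y. (S, y) \<in> P}"
  have finD: "finite D" unfolding D_def using fin_col[OF fin] .
  have neD: "D \<noteq> {}" using SP unfolding D_def by blast
  define m where "m = Min D"
  have mle: "\<And>y. (S, y) \<in> P \<Longrightarrow> m \<le> y" using Min_le[OF finD] unfolding m_def D_def by simp
  have mX: "m \<le> X" using mle SP by blast
  define M where "M = maxx P"
  have Mge: "\<And>d. d \<in> P \<Longrightarrow> fst d \<le> M" unfolding M_def maxx_def using fin by simp
  have "M \<in> fst ` P" unfolding M_def maxx_def using fin nemp by simp
  then obtain y1 where y1: "(M, y1) \<in> P" by force
  have y1Y: "y1 < Y" using assms(3) y1 unfolding descending_def M_def Y_def by blast
  have SM: "S \<le> M" using Mge SP by fastforce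
  have mY: "m < Y"
  proof -
    have "mx \<le> M" using mxle y1 by fastforce
    moreover have "mx \<noteq> M"
    proof
      assume "mx = M"
      then have "Y < Y" using y1Y YP assms(3) unfolding descending_def M_def Y_def by auto
      then show False by simp
    qed
    ultimately have lt1: "fst (mx, X) < fst (M, y1)" by simp
    have lt2: "snd (M, y1) < snd (mx, X)" using y1Y YX by simp
    from zpath[OF Z XP y1 lt1 lt2]
    show ?thesis
    proof
      assume "\<exists>r. (fst (mx, X), r) \<in> P \<and> (fst (M, y1), r) \<in> P"
      then obtain r where r: "(mx, r) \<in> P" "(M, r) \<in> P" by auto
      have "Y \<le> r" using Yle r(1) .
      then have "(M, Y) \<in> P" using colc[OF y1 r(2)] y1Y by simp
      then have "Y < Y" using assms(3) unfolding descending_def M_def Y_def by blast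
      then show ?thesis by simp
    next
      assume "\<exists>k. (k, snd (mx, X)) \<in> P \<and> (k, snd (M, y1)) \<in> P"
      then obtain k where k: "(k, X) \<in> P" "(k, y1) \<in> P" by auto
      have "(k, Y) \<in> P" using colc[OF k(2) k(1)] y1Y YX by simp
      then have "k \<le> T" using Tge by blast
      have "k \<le> S" using Sge k(1) .
      then have "(S, y1) \<in> P" using rowc[OF k(2) y1] SM by simp
      then have "m \<le> y1" using mle by blast
      then show ?thesis using y1Y by simp
    qed
  qed
  obtain x y where c: "c = (x, y)" by (cases c)
  have cP: "(x, y) \<in> P" and xT: "x > T" using cth c unfolding theta_def T_def by auto
  show "snd c \<ge> Min {y. (colS P, y) \<in> P}"
  proof (rule ccontr)
    assume "\<not> ?thesis"
    then have ym: "y < m" using c unfolding m_def D_def S_def by simp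
    have yY: "y < Y" using ym mY by simp
    have lt1: "fst (mx, X) < fst (x, y)" using mxT xT by simp
    have lt2: "snd (x, y) < snd (mx, X)" using yY YX by simp
    from zpath[OF Z XP cP lt1 lt2]
    show False
    proof
      assume "\<exists>r. (fst (mx, X), r) \<in> P \<and> (fst (x, y), r) \<in> P"
      then obtain r where r: "(mx, r) \<in> P" "(x, r) \<in> P" by auto
      have "Y \<le> r" using Yle r(1) .
      then have "(x, Y) \<in> P" using colc[OF cP r(2)] yY by simp
      then have "x \<le> T" using Tge by blast
      then show False using xT by simp
    next
      assume "\<exists>k. (k, snd (mx, X)) \<in> P \<and> (k, snd (x, y)) \<in> P"
      then obtain k where k: "(k, X) \<in> P" "(k, y) \<in> P" by auto
      have kS: "k \<le> S" using Sge k(1) .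
      show False
      proof (cases "S \<le> x")
        case True
        then have "(S, y) \<in> P" using rowc[OF k(2) cP] kS by simp
        then show False using mle ym by fastforce
      next
        case False
        have "mx \<le> x" using mxle cP by fastforce
        then have "(x, X) \<in> P" using rowc[OF XP SP] False by simp
        then have "(x, Y) \<in> P" using colc[OF cP] yY YX by simp
        then show False using Tge xT by fastforce
      qed
    qed
  qed
qed

end
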